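(* Let $f:\mathbb{N}\rightharpoonup\mathbb{N}$ be a partial function. Then the pca $\mathcal{K}_1^f$ is isomorphic to the pca $\mathcal{K}_1[f]$.
   Context: $\mathcal{K}_1$ is Kleene's first pca: underlying set $\mathbb{N}$, application $nm\simeq\varphi_n(m)$ where $\varphi_n$ is the $n$-th partial recursive function. $\mathcal{K}_1^f$ is the pca on $\mathbb{N}$ with application $nm\simeq\varphi^f_n(m)$, where $\varphi^f_n$ is the $n$-th partial function computable with an oracle for $f$. A pca is a set with a partial binary application admitting $K,S$ with $Kab=a$, $Sab{\downarrow}$, $Sabc\simeq ac(bc)$; each pca has fixed Booleans $\top,\bot$, pairing $p$ with projections $p_0,p_1$, and a coding $[u_0,\dots,u_{n-1}]$ of finite sequences with concatenation $\ast$. For a pca $A$ and partial $f:A\rightharpoonup A$, the pca $A[f]$ has underlying set $A$; an $f$-dialogue between $a,b$ is a code $u=[u_0,\dots,u_{n-1}]$ such that for each $i<n$ there is $v_i$ with $a\cdot([b]\ast[u_0,\dots,u_{i-1}])=p\bot v_i$ and $f(v_i)$ defined and equal to $u_i$; and $a\cdot^f b=c$ iff there is an $f$-dialogue $u$ between $a,b$ with $a\cdot([b]\ast u)=p\top c$. An applicative morphism $\gamma:A\to B$ is a function from $A$ to nonempty subsets of $B$ with some $r\in B$ such that $aa'{\downarrow}$, $b\in\gamma(a)$, $b'\in\gamma(a')$ imply $rbb'{\downarrow}$ and $rbb'\in\gamma(aa')$; composition is $(\delta\gamma)(a)=\bigcup_{b\in\gamma(a)}\delta(b)$, identities are $a\mapsto\{a\}$.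 Pcas $A,B$ are isomorphic if there are applicative morphisms $\gamma:A\to B$, $\delta:B\to A$ whose composites $\delta\gamma$, $\gamma\delta$ equal the identity morphisms. *)

theory Defs
  imports Main "HOL-Library.Nat_Bijection"
begin

type_synonym 'a pas = "'a \<Rightarrow> 'a \<Rightarrow> 'a option"

definition app2 :: "'a pas \<Rightarrow> 'a \<Rightarrow> 'a \<Rightarrow> 'a \<Rightarrow> 'a option" where
  "app2 app a b c = Option.bind (app a b) (\<lambda>d. app d c)"

definition is_pca :: "'a pas \<Rightarrow> bool" where
  "is_pca app \<longleftrightarrow> (\<exists>k s. (\<forall>a b. app2 app k a b = Some a)
                       \<and> (\<forall>a b. app2 app s a b \<noteq> None)
                       \<and> (\<forall>a b c. Option.bind (app2 app s a b) (\<lambda>d. app d c)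
                                 = Option.bind (app a c) (\<lambda>x. Option.bind (app b c) (\<lambda>y. app x y))))"

definition applicative_morphism :: "'a pas \<Rightarrow> 'b pas \<Rightarrow> ('a \<Rightarrow> 'b set) \<Rightarrow> bool" where
  "applicative_morphism appA appB \<gamma> \<longleftrightarrow>
     (\<forall>a. \<gamma> a \<noteq> {}) \<and>
     (\<exists>r. \<forall>a a' b b' c. appA a a' = Some c \<longrightarrow> b \<in> \<gamma> a \<longrightarrow> b' \<in> \<gamma> a' \<longrightarrow>
            (\<exists>d. app2 appB r b b' = Some d \<and> d \<in> \<gamma> c))"

definition morph_comp :: "('b \<Rightarrow> 'c set) \<Rightarrow> ('a \<Rightarrow> 'b set) \<Rightarrow> ('a \<Rightarrow> 'c set)" where
  "morph_comp \<delta> \<gamma> = (\<lambda>a. \<Union>b\<in>\<gamma> a. \<delta> b)"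

definition pca_isomorphic :: "'a pas \<Rightarrow> 'b pas \<Rightarrow> bool" where
  "pca_isomorphic appA appB \<longleftrightarrow>
     (\<exists>\<gamma> \<delta>. applicative_morphism appA appB \<gamma> \<and> applicative_morphism appB appA \<delta> \<and>
            morph_comp \<delta> \<gamma> = (\<lambda>a. {a}) \<and> morph_comp \<gamma> \<delta> = (\<lambda>b. {b}))"

text \<open>The fixed Booleans T (top), F (bot), pairing p, and sequence coding enc
  (enc [u0,...,u(n-1)] is the code [u0,...,u(n-1)]); then [b] * [u0,...,u(i-1)]
  is enc (b # [u0,...,u(i-1)]).\<close>

definition is_dialogue :: "'a pas \<Rightarrow> ('a \<Rightarrow> 'a option) \<Rightarrow> 'a \<Rightarrow> 'a \<Rightarrow> ('a list \<Rightarrow> 'a)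
                            \<Rightarrow> 'a \<Rightarrow> 'a \<Rightarrow> 'a list \<Rightarrow> bool" where
  "is_dialogue app f F p enc a b us \<longleftrightarrow>
     (\<forall>i < length us. \<exists>v. app a (enc (b # take i us)) = app2 app p F v \<and> f v = Some (us ! i))"

definition rel_app_rel :: "'a pas \<Rightarrow> ('a \<Rightarrow> 'a option) \<Rightarrow> 'a \<Rightarrow> 'a \<Rightarrow> 'a \<Rightarrow> ('a list \<Rightarrow> 'a)
                            \<Rightarrow> 'a \<Rightarrow> 'a \<Rightarrow> 'a \<Rightarrow> bool" where
  "rel_app_rel app f T F p enc a b c \<longleftrightarrow>
     (\<exists>us. is_dialogue app f F p enc a b us \<and> app a (enc (b # us)) = app2 app p T c)"

definition rel_app :: "'a pas \<Rightarrow> ('a \<Rightarrow> 'a option) \<Rightarrow> 'a \<Rightarrow> 'a \<Rightarrow> 'a \<Rightarrow> ('a list \<Rightarrow> 'a) \<Rightarrow> 'a pas" where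
  "rel_app app f T F p enc a b =
     (if \<exists>c. rel_app_rel app f T F p enc a b c
      then Some (THE c. rel_app_rel app f T F p enc a b c) else None)"

datatype rf = Zer | Succ | Fst | Snd | Orc | Comp rf rf | Pair rf rf | Rec rf rf | Mu rf

inductive rf_eval :: "(nat \<Rightarrow> nat option) \<Rightarrow> rf \<Rightarrow> nat \<Rightarrow> nat \<Rightarrow> bool" for f where
  "rf_eval f Zer x 0"
| "rf_eval f Succ x (Suc x)"
| "rf_eval f Fst x (fst (prod_decode x))"
| "rf_eval f Snd x (snd (prod_decode x))"
| "f x = Some y \<Longrightarrow> rf_eval f Orc x y"
| "rf_eval f h x y \<Longrightarrow> rf_eval f g y z \<Longrightarrow> rf_eval f (Comp g h) x z"
| "rf_eval f g x y \<Longrightarrow> rf_eval f h x z \<Longrightarrow> rf_eval f (Pair g h) x (prod_encode (y, z))"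
| "rf_eval f g x y \<Longrightarrow> rf_eval f (Rec g h) (prod_encode (x, 0)) y"
| "rf_eval f (Rec g h) (prod_encode (x, n)) y \<Longrightarrow> rf_eval f h (prod_encode (x, prod_encode (n, y))) z
     \<Longrightarrow> rf_eval f (Rec g h) (prod_encode (x, Suc n)) z"
| "rf_eval f g (prod_encode (x, n)) 0 \<Longrightarrow> (\<forall>k<n. \<exists>y. y \<noteq> 0 \<and> rf_eval f g (prod_encode (x, k)) y)
     \<Longrightarrow> rf_eval f (Mu g) x n"

lemma fst_prod_decode_le: "fst (prod_decode a) \<le> a"
  by (metis le_prod_encode_1 prod.collapse prod_decode_inverse)

lemma snd_prod_decode_le: "snd (prod_decode a) \<le> a"
  by (metis le_prod_encode_2 prod.collapse prod_decode_inverse)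

function rf_decode :: "nat \<Rightarrow> rf" where
  "rf_decode n =
     (if n mod 9 = 0 then Zer
      else if n mod 9 = 1 then Succ
      else if n mod 9 = 2 then Fst
      else if n mod 9 = 3 then Snd
      else if n mod 9 = 4 then Orc
      else if n mod 9 = 5 then Comp (rf_decode (fst (prod_decode (n div 9)))) (rf_decode (snd (prod_decode (n div 9))))
      else if n mod 9 = 6 then Pair (rf_decode (fst (prod_decode (n div 9)))) (rf_decode (snd (prod_decode (n div 9))))
      else if n mod 9 = 7 then Rec (rf_decode (fst (prod_decode (n div 9)))) (rf_decode (snd (prod_decode (n div 9))))
      else Mu (rf_decode (n div 9)))"
  by auto
lemma rf_decode_lt: "n mod 9 \<noteq> 0 \<Longrightarrow> n div 9 < (n::nat)"
  by (cases "n = 0") auto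

termination
  apply (relation "measure id")
  apply (simp_all add: rf_decode_lt)
  by (metis fst_prod_decode_le snd_prod_decode_le rf_decode_lt le_less_trans
        zero_neq_numeral)+

definition phi :: "(nat \<Rightarrow> nat option) \<Rightarrow> nat \<Rightarrow> nat \<Rightarrow> nat option" where
  "phi f n m = (if \<exists>y. rf_eval f (rf_decode n) m y then Some (THE y. rf_eval f (rf_decode n) m y) else None)"

definition K1f :: "(nat \<Rightarrow> nat option) \<Rightarrow> nat pas" where
  "K1f f = (\<lambda>n m. phi f n m)"

definition K1 :: "nat pas" where
  "K1 = K1f (\<lambda>_. None)"

definition K1_structure :: "nat \<Rightarrow> nat \<Rightarrow> nat \<Rightarrow> (nat list \<Rightarrow> nat) \<Rightarrow> bool" where
  "K1_structure T F p enc \<longleftrightarrow>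
     (\<forall>x y. app2 K1 T x y = Some x) \<and> (\<forall>x y. app2 K1 F x y = Some y) \<and>
     (\<forall>x y. app2 K1 p x y \<noteq> None) \<and>
     (\<exists>p0 p1. \<forall>x y z. app2 K1 p x y = Some z \<longrightarrow> K1 p0 z = Some x \<and> K1 p1 z = Some y) \<and>
     inj enc \<and>
     (\<exists>lh. \<forall>us. K1 lh (enc us) = Some (length us)) \<and>
     (\<exists>pr. \<forall>us i. i < length us \<longrightarrow> app2 K1 pr (enc us) i = Some (us ! i)) \<and>
     (\<exists>sn. \<forall>us x. app2 K1 sn (enc us) x = Some (enc (us @ [x])))"

end

theory Submission
  imports Defs
begin


abbreviation pe where "pe a b \<equiv> prod_encode (a, b)"
abbreviation p1 where "p1 x \<equiv> fst (prod_decode x)"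
abbreviation p2 where "p2 x \<equiv> snd (prod_decode x)"

lemma p1_pe[simp]: "p1 (pe a b) = a" by (simp add: prod_encode_inverse)
lemma p2_pe[simp]: "p2 (pe a b) = b" by (simp add: prod_encode_inverse)
lemma pe_eq_iff[simp]: "pe a b = pe c d \<longleftrightarrow> a = c \<and> b = d"
  by (metis p1_pe p2_pe)
lemma pe_p12[simp]: "pe (p1 x) (p2 x) = x" by (simp add: prod_decode_inverse)

lemma rf_eval_det:
  assumes "rf_eval f c x y" "rf_eval f c x y'" shows "y = y'"
  using assms
proof (induction arbitrary: y' rule: rf_eval.induct)
  case (10 g x n)
  from "10.prems" obtain n' where e: "y' = n'" "rf_eval f g (pe x n') 0"
     "\<forall>k<n'. \<exists>y. y \<noteq> 0 \<and> rf_eval f g (pe x k) y"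
    by (cases rule: rf_eval.cases) auto
  show ?case
  proof (rule ccontr)
    assume "n \<noteq> y'"
    then have "n < n' \<or> n' < n" using e by auto
    then show False
    proof
      assume "n < n'"
      then obtain y where "y \<noteq> 0" "rf_eval f g (pe x n) y" using e by auto
      then show False using "10.IH"(1) by fastforce
    next
      assume "n' < n"
      then obtain y where "y \<noteq> 0" "\<forall>z. rf_eval f g (pe x n') z \<longrightarrow> y = z"
        using "10.IH"(2) by blast
      then show False using e by auto
    qed
  qed
next
  case (1 x) then show ?case by (cases rule: rf_eval.cases) auto
next
  case (2 x) then show ?case by (cases rule: rf_eval.cases) auto
next
  case (3 x) then show ?case by (cases rule: rf_eval.cases) auto
next
  case (4 x) then show ?case by (cases rule: rf_eval.cases) auto
next
  case (5 x y) from "5.prems" "5.hyps" show ?case by (cases rule: rf_eval.cases) auto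
next
  case (6 h x y g z) from "6.prems" show ?case
    by (cases rule: rf_eval.cases) (use "6.IH" in blast)+
next
  case (7 g x y h z) from "7.prems" show ?case
    by (cases rule: rf_eval.cases) (use "7.IH" in fastforce)+
next
  case (8 g x y h) from "8.prems" show ?case
    by (cases rule: rf_eval.cases) (use "8.IH" in fastforce)+
next
  case (9 g h x n y z) from "9.prems" show ?case
    by (cases rule: rf_eval.cases) (use "9.IH" in fastforce)+
qed

lemmas ev_Zer = rf_eval.intros(1)
lemmas ev_Succ = rf_eval.intros(2)
lemmas ev_Fst = rf_eval.intros(3)
lemmas ev_Snd = rf_eval.intros(4)
lemmas ev_Orc = rf_eval.intros(5)
lemmas ev_Comp = rf_eval.intros(6)
lemmas ev_Pair = rf_eval.intros(7)
lemmas ev_Rec0 = rf_eval.intros(8)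
lemmas ev_RecS = rf_eval.intros(9)
lemmas ev_Mu = rf_eval.intros(10)

fun rf_encode :: "rf \<Rightarrow> nat" where
  "rf_encode Zer = 0"
| "rf_encode Succ = 1"
| "rf_encode Fst = 2"
| "rf_encode Snd = 3"
| "rf_encode Orc = 4"
| "rf_encode (Comp g h) = 5 + 9 * pe (rf_encode g) (rf_encode h)"
| "rf_encode (Pair g h) = 6 + 9 * pe (rf_encode g) (rf_encode h)"
| "rf_encode (Rec g h) = 7 + 9 * pe (rf_encode g) (rf_encode h)"
| "rf_encode (Mu g) = 8 + 9 * rf_encode g"

lemma rf_decode_eq: "rf_decode n =
     (if n mod 9 = 0 then Zer
      else if n mod 9 = 1 then Succ
      else if n mod 9 = 2 then Fst
      else if n mod 9 = 3 then Snd
      else if n mod 9 = 4 then Orc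
      else if n mod 9 = 5 then Comp (rf_decode (p1 (n div 9))) (rf_decode (p2 (n div 9)))
      else if n mod 9 = 6 then Pair (rf_decode (p1 (n div 9))) (rf_decode (p2 (n div 9)))
      else if n mod 9 = 7 then Rec (rf_decode (p1 (n div 9))) (rf_decode (p2 (n div 9)))
      else Mu (rf_decode (n div 9)))"
  by (rule rf_decode.simps)

declare rf_decode.simps[simp del]

lemma rf_decode_encode[simp]: "rf_decode (rf_encode c) = c"
  by (induction c) (subst rf_decode_eq; simp)+

lemma dec_Zer: "rf_decode c = Zer \<Longrightarrow> c mod 9 = 0"
  using rf_decode_eq[of c] by (auto split: if_splits)
lemma dec_Succ: "rf_decode c = Succ \<Longrightarrow> c mod 9 = 1"
  using rf_decode_eq[of c] by (auto split: if_splits)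
lemma dec_Fst: "rf_decode c = Fst \<Longrightarrow> c mod 9 = 2"
  using rf_decode_eq[of c] by (auto split: if_splits)
lemma dec_Snd: "rf_decode c = Snd \<Longrightarrow> c mod 9 = 3"
  using rf_decode_eq[of c] by (auto split: if_splits)
lemma dec_Orc: "rf_decode c = Orc \<Longrightarrow> c mod 9 = 4"
  using rf_decode_eq[of c] by (auto split: if_splits)
lemma dec_Comp: "rf_decode c = Comp g h \<Longrightarrow> c mod 9 = 5 \<and> rf_decode (p1 (c div 9)) = g \<and> rf_decode (p2 (c div 9)) = h"
  using rf_decode_eq[of c] by (auto split: if_splits)
lemma dec_Pair: "rf_decode c = Pair g h \<Longrightarrow> c mod 9 = 6 \<and> rf_decode (p1 (c div 9)) = g \<and> rf_decode (p2 (c div 9)) = h"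
  using rf_decode_eq[of c] by (auto split: if_splits)
lemma dec_Rec: "rf_decode c = Rec g h \<Longrightarrow> c mod 9 = 7 \<and> rf_decode (p1 (c div 9)) = g \<and> rf_decode (p2 (c div 9)) = h"
  using rf_decode_eq[of c] by (auto split: if_splits)
lemma dec_Mu: "rf_decode c = Mu g \<Longrightarrow> c mod 9 = 8 \<and> rf_decode (c div 9) = g"
  using rf_decode_eq[of c] by (auto split: if_splits)

lemma phi_eq: "rf_eval f (rf_decode n) x y \<Longrightarrow> phi f n x = Some y"
  unfolding phi_def using rf_eval_det by (auto intro: the_equality)

lemma phi_Some: "phi f n x = Some y \<Longrightarrow> rf_eval f (rf_decode n) x y"
  unfolding phi_def by (auto split: if_splits) (metis rf_eval_det theI)





section \<open>Computability library\<close>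

definition pcomp :: "((nat \<Rightarrow> nat option) \<Rightarrow> nat \<Rightarrow> nat option) \<Rightarrow> bool" where
  "pcomp G \<longleftrightarrow> (\<exists>c. \<forall>f x y. G f x = Some y \<longrightarrow> rf_eval f c x y)"

definition tot :: "(nat \<Rightarrow> nat) \<Rightarrow> bool" where
  "tot G \<longleftrightarrow> (\<exists>c. \<forall>f x. rf_eval f c x (G x))"

lemma tot_id: "tot (\<lambda>x. x)"
  unfolding tot_def
  by (rule exI[of _ "Pair Fst Snd"]) (metis ev_Fst ev_Pair ev_Snd pe_p12)

lemma tot_zero: "tot (\<lambda>x. 0)"
  unfolding tot_def by (blast intro: ev_Zer)

lemma tot_Suc: "tot A \<Longrightarrow> tot (\<lambda>x. Suc (A x))"
  unfolding tot_def by (blast intro: ev_Comp ev_Succ)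

lemma tot_const: "tot (\<lambda>x. k)"
  by (induction k) (auto intro: tot_zero tot_Suc)

lemma tot_p1: "tot A \<Longrightarrow> tot (\<lambda>x. p1 (A x))"
  unfolding tot_def by (blast intro: ev_Comp ev_Fst)

lemma tot_p2: "tot A \<Longrightarrow> tot (\<lambda>x. p2 (A x))"
  unfolding tot_def by (blast intro: ev_Comp ev_Snd)

lemma tot_pe: "tot A \<Longrightarrow> tot B \<Longrightarrow> tot (\<lambda>x. pe (A x) (B x))"
  unfolding tot_def by (blast intro: ev_Pair)

lemma tot_comp: "tot F \<Longrightarrow> tot G \<Longrightarrow> tot (\<lambda>x. F (G x))"
  unfolding tot_def by (blast intro: ev_Comp)

lemma tot_app2: "tot (\<lambda>z. F (p1 z) (p2 z)) \<Longrightarrow> tot A \<Longrightarrow> tot B \<Longrightarrow> tot (\<lambda>x. F (A x) (B x))"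
  using tot_comp[of "\<lambda>z. F (p1 z) (p2 z)" "\<lambda>x. pe (A x) (B x)"] tot_pe by simp

lemma tot_iter:
  assumes "tot N" "tot A" "tot (\<lambda>z. S (p1 z) (p2 z))"
  shows "tot (\<lambda>x. (S x ^^ N x) (A x))"
proof -
  obtain cn ca cs where n: "\<And>f x. rf_eval f cn x (N x)" and a: "\<And>f x. rf_eval f ca x (A x)"
    and s: "\<And>f z. rf_eval f cs z (S (p1 z) (p2 z))"
    using assms unfolding tot_def by metis
  define h where "h = Comp cs (Pair Fst (Comp Snd Snd))"
  have hh: "rf_eval f h (pe x (pe k y)) (S x y)" for f x k y
  proof -
    have "rf_eval f (Pair Fst (Comp Snd Snd)) (pe x (pe k y)) (pe x y)"
      by (metis ev_Comp ev_Fst ev_Pair ev_Snd p1_pe p2_pe)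
    then show ?thesis unfolding h_def using s[of f "pe x y"] by (auto intro: ev_Comp)
  qed
  have r: "rf_eval f (Rec ca h) (pe x n) ((S x ^^ n) (A x))" for f x n
  proof (induction n)
    case 0 then show ?case using a by (auto intro: ev_Rec0)
  next
    case (Suc n) then show ?case using hh by (auto intro: ev_RecS)
  qed
  have "rf_eval f (Comp (Rec ca h) (Pair (Pair Fst Snd) cn)) x ((S x ^^ N x) (A x))" for f x
  proof -
    have "rf_eval f (Pair (Pair Fst Snd) cn) x (pe x (N x))"
      by (metis ev_Fst ev_Pair ev_Snd pe_p12 n)
    then show ?thesis using r by (blast intro: ev_Comp)
  qed
  then show ?thesis unfolding tot_def by blast
qed

lemma funpow_const_if: "((\<lambda>s. b) ^^ n) a = (if n = 0 then a else b)"
  by (induction n) auto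

lemma tot_if0: "tot N \<Longrightarrow> tot A \<Longrightarrow> tot B \<Longrightarrow> tot (\<lambda>x. if N x = 0 then A x else B x)"
  using tot_iter[of N A "\<lambda>x s. B x"] tot_comp[of B p1] tot_p1[OF tot_id]
  by (simp add: funpow_const_if)

lemma tot_plus: "tot A \<Longrightarrow> tot B \<Longrightarrow> tot (\<lambda>x. A x + B x)"
proof -
  have "tot (\<lambda>x. (Suc ^^ B x) (A x))" if "tot A" "tot B"
    using tot_iter[of B A "\<lambda>x s. Suc s"] that tot_Suc[OF tot_p2[OF tot_id]] by simp
  moreover have "(Suc ^^ b) a = a + b" for a b by (induction b) auto
  ultimately show "tot A \<Longrightarrow> tot B \<Longrightarrow> ?thesis" by (simp add: add.commute)
qed

lemma tot_times: "tot A \<Longrightarrow> tot B \<Longrightarrow> tot (\<lambda>x. A x * B x)"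
proof -
  have "tot (\<lambda>x. ((\<lambda>s. s + A x) ^^ B x) 0)" if "tot A" "tot B"
    using tot_iter[of B "\<lambda>x. 0" "\<lambda>x s. s + A x"] that tot_const
      tot_plus[OF tot_p2[OF tot_id] tot_comp[OF that(1) tot_p1[OF tot_id]]] by simp
  moreover have "((\<lambda>s. s + a) ^^ b) 0 = a * b" for a b by (induction b) auto
  ultimately show "tot A \<Longrightarrow> tot B \<Longrightarrow> ?thesis" by (simp add: mult.commute)
qed


definition "predn n = p1 (((\<lambda>s. pe (p2 s) (Suc (p2 s))) ^^ n) (pe 0 0))"

lemma predn_eq: "predn n = n - 1"
proof -
  have "((\<lambda>s. pe (p2 s) (Suc (p2 s))) ^^ n) (pe 0 0) = pe (n - 1) n" for n
    by (induction n) auto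
  then show ?thesis unfolding predn_def by simp
qed

lemma tot_minus: "tot A \<Longrightarrow> tot B \<Longrightarrow> tot (\<lambda>x. A x - B x)"
proof -
  have tp: "tot (\<lambda>x. (A x) - 1)" if "tot A" for A
  proof -
    have "tot (\<lambda>x. predn (A x))" unfolding predn_def
      apply (rule tot_p1)
      apply (rule tot_iter)
        apply (rule that)
       apply (rule tot_pe; rule tot_const)
      apply (rule tot_pe)
       apply (rule tot_p2, rule tot_p2, rule tot_id)
      apply (rule tot_Suc, rule tot_p2, rule tot_p2, rule tot_id)
      done
    then show ?thesis by (simp add: predn_eq)
  qed
  have "tot (\<lambda>x. ((\<lambda>s. s - 1) ^^ B x) (A x))" if "tot A" "tot B"
    using tot_iter[of B A "\<lambda>x s. s - 1"] that tp[OF tot_p2[OF tot_id]] by simp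
  moreover have "((\<lambda>s. s - 1) ^^ b) a = a - b" for a b :: nat by (induction b) auto
  ultimately show "tot A \<Longrightarrow> tot B \<Longrightarrow> ?thesis" by simp
qed

definition tpred :: "(nat \<Rightarrow> bool) \<Rightarrow> bool" where
  "tpred P \<longleftrightarrow> (\<exists>X. tot X \<and> (\<forall>x. P x \<longleftrightarrow> X x = 0))"

lemma tot_if: "tpred P \<Longrightarrow> tot A \<Longrightarrow> tot B \<Longrightarrow> tot (\<lambda>x. if P x then A x else B x)"
proof -
  assume "tpred P" "tot A" "tot B"
  then obtain X where "tot X" "\<forall>x. P x \<longleftrightarrow> X x = 0" unfolding tpred_def by blast
  then have "(\<lambda>x. if P x then A x else B x) = (\<lambda>x. if X x = 0 then A x else B x)" by auto
  then show ?thesis using tot_if0[OF \<open>tot X\<close> \<open>tot A\<close> \<open>tot B\<close>] by simp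
qed

lemma tpred_eq: "tot A \<Longrightarrow> tot B \<Longrightarrow> tpred (\<lambda>x. A x = B x)"
  unfolding tpred_def
  by (rule exI[of _ "\<lambda>x. (A x - B x) + (B x - A x)"]) (auto simp: tot_plus tot_minus)

lemma tpred_conj: "tpred P \<Longrightarrow> tpred Q \<Longrightarrow> tpred (\<lambda>x. P x \<and> Q x)"
proof -
  assume "tpred P" "tpred Q"
  then obtain X Y where "tot X" "\<forall>x. P x \<longleftrightarrow> X x = 0" "tot Y" "\<forall>x. Q x \<longleftrightarrow> Y x = 0"
    unfolding tpred_def by blast
  then show ?thesis unfolding tpred_def
    by (intro exI[of _ "\<lambda>x. X x + Y x"]) (simp add: tot_plus)
qed

lemma tpred_not: "tpred P \<Longrightarrow> tpred (\<lambda>x. \<not> P x)"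
  unfolding tpred_def
  apply clarify
  subgoal for X by (rule exI[of _ "\<lambda>x. if X x = 0 then 1 else 0"]) (auto intro: tot_if0 tot_const)
  done

lemma tpred_disj: "tpred P \<Longrightarrow> tpred Q \<Longrightarrow> tpred (\<lambda>x. P x \<or> Q x)"
proof -
  assume "tpred P" "tpred Q"
  then have "tpred (\<lambda>x. \<not> (\<not> P x \<and> \<not> Q x))" by (intro tpred_not tpred_conj)
  then show ?thesis by simp
qed


lemma divmod9: "((\<lambda>s. if p2 s = 8 then pe (Suc (p1 s)) 0 else pe (p1 s) (Suc (p2 s))) ^^ n) (pe 0 0)
   = pe (n div 9) (n mod 9)"
proof (induction n)
  case 0 then show ?case by simp
next
  case (Suc n)
  have "n mod 9 < 9" by simp
  then show ?case using Suc
    by (auto simp: mod_Suc div_Suc)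
qed

lemma tot_div9: "tot A \<Longrightarrow> tot (\<lambda>x. A x div 9)" and tot_mod9: "tot A \<Longrightarrow> tot (\<lambda>x. A x mod 9)"
proof -
  assume a: "tot A"
  have "tot (\<lambda>x. ((\<lambda>s. if p2 s = 8 then pe (Suc (p1 s)) 0 else pe (p1 s) (Suc (p2 s))) ^^ A x) (pe 0 0))"
    by (intro tot_iter tot_pe tot_const tot_if tpred_eq tot_p1 tot_p2 tot_id tot_Suc) (fact a)+
  then have t: "tot (\<lambda>x. pe (A x div 9) (A x mod 9))" by (simp only: divmod9)
  show "tot (\<lambda>x. A x div 9)" using tot_p1[OF t] by simp
  show "tot (\<lambda>x. A x mod 9)" using tot_p2[OF t] by simp
qed

lemmas tot_intros = tot_id tot_const tot_Suc tot_p1 tot_p2 tot_pe tot_if tpred_eq tpred_conj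
  tpred_not tpred_disj tot_plus tot_times tot_minus tot_div9 tot_mod9




section \<open>Abstract machine\<close>

definition "cons x xs = Suc (pe x xs)"
definition "FC g = pe 0 g"
definition "FP1 h x = pe 1 (pe h x)"
definition "FP2 y = pe 2 y"
definition "FR h x k N = pe 3 (pe h (pe x (pe k N)))"
definition "FM g x k = pe 4 (pe g (pe x k))"
definition "Ev c x K = pe 0 (pe c (pe x K))"
definition "Rt y K = pe 1 (pe y K)"
definition "Lk x r K = pe 2 (pe x (pe r K))"
definition "Hl v = pe 3 v"

lemmas mdefs = cons_def FC_def FP1_def FP2_def FR_def FM_def Ev_def Rt_def Lk_def Hl_def

definition nstep :: "nat \<Rightarrow> nat \<Rightarrow> nat" where
"nstep t s = (let tg = p1 s; d = p2 s in
  if tg = 0 then (let c = p1 d; x = p1 (p2 d); K = p2 (p2 d); m = c mod 9; a = c div 9 in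
     if m = 0 then Rt 0 K else if m = 1 then Rt (Suc x) K else if m = 2 then Rt (p1 x) K
     else if m = 3 then Rt (p2 x) K
     else if m = 4 then Lk x t K
     else if m = 5 then Ev (p2 a) x (cons (FC (p1 a)) K)
     else if m = 6 then Ev (p1 a) x (cons (FP1 (p2 a) x) K)
     else if m = 7 then Ev (p1 a) (p1 x) (cons (FR (p2 a) (p1 x) 0 (p2 x)) K)
     else Ev a (pe x 0) (cons (FM a x 0) K))
  else if tg = 1 then (let y = p1 d; K = p2 d in
     if K = 0 then s else (let fr = p1 (K - 1); K' = p2 (K - 1); ft = p1 fr; fa = p2 fr in
       if ft = 0 then Ev fa y K'
       else if ft = 1 then Ev (p1 fa) (p2 fa) (cons (FP2 y) K')
       else if ft = 2 then Rt (pe fa y) K'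
       else if ft = 3 then (let h = p1 fa; x = p1 (p2 fa); k = p1 (p2 (p2 fa)); N = p2 (p2 (p2 fa)) in
            if k = N then Rt y K' else Ev h (pe x (pe k y)) (cons (FR h x (Suc k) N) K'))
       else (let g = p1 fa; x = p1 (p2 fa); k = p2 (p2 fa) in
            if y = 0 then Rt k K' else Ev g (pe x (Suc k)) (cons (FM g x (Suc k)) K'))))
  else if tg = 2 then (let x = p1 d; r = p1 (p2 d); K = p2 (p2 d) in
     if r = 0 then Hl x else if p1 (p1 (r - 1)) = x then Rt (p2 (p1 (r - 1))) K
     else Lk x (p2 (r - 1)) K)
  else s)"

lemma tot_nstep: "tot (\<lambda>z. nstep (p1 z) (p2 z))"
  unfolding nstep_def Let_def mdefs
  by (intro tot_intros)


fun tenc :: "(nat \<times> nat) list \<Rightarrow> nat" where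
  "tenc [] = 0"
| "tenc ((v, a) # r) = cons (pe v a) (tenc r)"

lemma cons_nz[simp]: "cons x xs \<noteq> 0" by (simp add: cons_def)
lemma cons_m1[simp]: "cons x xs - 1 = pe x xs" by (simp add: cons_def)
lemma cons_mS[simp]: "cons x xs - Suc 0 = pe x xs" by (simp add: cons_def)

lemma st_Ev:
  "nstep t (Ev c x K) = (let m = c mod 9; a = c div 9 in
     if m = 0 then Rt 0 K else if m = 1 then Rt (Suc x) K else if m = 2 then Rt (p1 x) K
     else if m = 3 then Rt (p2 x) K
     else if m = 4 then Lk x t K
     else if m = 5 then Ev (p2 a) x (cons (FC (p1 a)) K)
     else if m = 6 then Ev (p1 a) x (cons (FP1 (p2 a) x) K)
     else if m = 7 then Ev (p1 a) (p1 x) (cons (FR (p2 a) (p1 x) 0 (p2 x)) K)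
     else Ev a (pe x 0) (cons (FM a x 0) K))"
  by (simp add: nstep_def Ev_def Let_def)

lemma st_FC[simp]: "nstep t (Rt y (cons (FC g) K)) = Ev g y K"
  by (simp add: nstep_def Rt_def FC_def Let_def)
lemma st_FP1[simp]: "nstep t (Rt y (cons (FP1 h x) K)) = Ev h x (cons (FP2 y) K)"
  by (simp add: nstep_def Rt_def FP1_def Let_def)
lemma st_FP2[simp]: "nstep t (Rt z (cons (FP2 y) K)) = Rt (pe y z) K"
  by (simp add: nstep_def Rt_def FP2_def Let_def)
lemma st_FR[simp]: "nstep t (Rt y (cons (FR h x k N) K)) =
   (if k = N then Rt y K else Ev h (pe x (pe k y)) (cons (FR h x (Suc k) N) K))"
  by (simp add: nstep_def Rt_def FR_def Let_def)
lemma st_FM[simp]: "nstep t (Rt y (cons (FM g x k) K)) =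
   (if y = 0 then Rt k K else Ev g (pe x (Suc k)) (cons (FM g x (Suc k)) K))"
  by (simp add: nstep_def Rt_def FM_def Let_def)
lemma st_Rt0[simp]: "nstep t (Rt y 0) = Rt y 0"
  by (simp add: nstep_def Rt_def Let_def)
lemma st_Hl[simp]: "nstep t (Hl v) = Hl v"
  by (simp add: nstep_def Hl_def Let_def)
lemma st_Lk_nil[simp]: "nstep t (Lk x 0 K) = Hl x"
  by (simp add: nstep_def Lk_def Let_def)
lemma st_Lk_cons[simp]: "nstep t (Lk x (cons (pe v a) r) K) = (if v = x then Rt a K else Lk x r K)"
  by (simp add: nstep_def Lk_def Let_def)

definition reach :: "nat \<Rightarrow> nat \<Rightarrow> nat \<Rightarrow> bool" where
  "reach t s s' \<longleftrightarrow> (\<exists>n. (nstep t ^^ n) s = s')"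

lemma reach_refl[simp]: "reach t s s"
  unfolding reach_def by (rule exI[of _ 0]) simp

lemma reach_trans: "reach t s1 s2 \<Longrightarrow> reach t s2 s3 \<Longrightarrow> reach t s1 s3"
  unfolding reach_def by (metis funpow_add comp_apply)

lemma reach_step: "reach t (nstep t s) s' \<Longrightarrow> reach t s s'"
  unfolding reach_def by (metis funpow_Suc_right comp_apply)

lemma reach_Lk: "reach (tenc tb) (Lk x (tenc r) K) (case map_of r x of Some a \<Rightarrow> Rt a K | None \<Rightarrow> Hl x)"
proof (induction r)
  case Nil then show ?case by (auto intro: reach_step)
next
  case (Cons e r) then show ?case by (cases e) (auto intro: reach_step)
qed

definition okr :: "(nat \<times> nat) list \<Rightarrow> nat set \<Rightarrow> nat \<Rightarrow> nat \<Rightarrow> bool" where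
  "okr tb Q s s' \<longleftrightarrow> reach (tenc tb) s s' \<or> (\<exists>v. v \<in> Q \<and> map_of tb v = None \<and> reach (tenc tb) s (Hl v))"

lemma okr_refl[simp]: "okr tb Q s s" unfolding okr_def by simp

lemma okr_trans: "okr tb Q s1 s2 \<Longrightarrow> okr tb Q s2 s3 \<Longrightarrow> okr tb Q s1 s3"
  unfolding okr_def by (meson reach_trans)

lemma okr_mono: "okr tb Q s s' \<Longrightarrow> Q \<subseteq> Q' \<Longrightarrow> okr tb Q' s s'"
  unfolding okr_def by blast

lemma okr_step: "okr tb Q (nstep (tenc tb) s) s' \<Longrightarrow> okr tb Q s s'"
  unfolding okr_def by (meson reach_step)

definition cprop :: "(nat \<Rightarrow> nat option) \<Rightarrow> rf \<Rightarrow> nat \<Rightarrow> nat \<Rightarrow> bool" where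
  "cprop f g x y \<longleftrightarrow> (\<exists>Q. finite Q \<and> Q \<subseteq> dom f \<and>
     (\<forall>tb c K. map_of tb \<subseteq>\<^sub>m f \<longrightarrow> rf_decode c = g \<longrightarrow> okr tb Q (Ev c x K) (Rt y K)) \<and>
     (\<forall>g' h' x' n. g = Rec g' h' \<longrightarrow> x = pe x' n \<longrightarrow>
        (\<forall>tb cg ch N K. map_of tb \<subseteq>\<^sub>m f \<longrightarrow> rf_decode cg = g' \<longrightarrow> rf_decode ch = h' \<longrightarrow> n \<le> N \<longrightarrow>
           okr tb Q (Ev cg x' (cons (FR ch x' 0 N) K)) (Rt y (cons (FR ch x' n N) K)))))"

lemma complete: "rf_eval f g x y \<Longrightarrow> cprop f g x y"
proof (induction rule: rf_eval.induct)
  case (1 x)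
  show ?case unfolding cprop_def
    by (rule exI[of _ "{}"]) (auto intro: okr_step[where s="Ev _ _ _"] simp: st_Ev dec_Zer)
next
  case (2 x)
  show ?case unfolding cprop_def
    by (rule exI[of _ "{}"]) (auto intro: okr_step[where s="Ev _ _ _"] simp: st_Ev dec_Succ)
next
  case (3 x)
  show ?case unfolding cprop_def
    by (rule exI[of _ "{}"]) (auto intro: okr_step[where s="Ev _ _ _"] simp: st_Ev dec_Fst)
next
  case (4 x)
  show ?case unfolding cprop_def
    by (rule exI[of _ "{}"]) (auto intro: okr_step[where s="Ev _ _ _"] simp: st_Ev dec_Snd)
next
  case (5 x y)
  show ?case unfolding cprop_def
  proof (rule exI[of _ "{x}"], intro conjI allI impI)
    show "finite {x}" by simp
    show "{x} \<subseteq> dom f" using 5 by auto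
  next
    fix tb c K assume m: "map_of tb \<subseteq>\<^sub>m f" and d: "rf_decode c = Orc"
    have "nstep (tenc tb) (Ev c x K) = Lk x (tenc tb) K" using dec_Orc[OF d] by (simp add: st_Ev)
    moreover have "reach (tenc tb) (Lk x (tenc tb) K) (case map_of tb x of Some a \<Rightarrow> Rt a K | None \<Rightarrow> Hl x)"
      by (rule reach_Lk)
    ultimately show "okr tb {x} (Ev c x K) (Rt y K)"
      using m 5 unfolding okr_def
      by (cases "map_of tb x") (auto intro: reach_step simp: map_le_def dom_def)
  qed simp
next
  case (6 h x y g z)
  from "6.IH" obtain Q1 Q2 where q: "finite Q1" "Q1 \<subseteq> dom f" "finite Q2" "Q2 \<subseteq> dom f"
    and i1: "\<And>tb c K. map_of tb \<subseteq>\<^sub>m f \<Longrightarrow> rf_decode c = h \<Longrightarrow> okr tb Q1 (Ev c x K) (Rt y K)"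
    and i2: "\<And>tb c K. map_of tb \<subseteq>\<^sub>m f \<Longrightarrow> rf_decode c = g \<Longrightarrow> okr tb Q2 (Ev c y K) (Rt z K)"
    unfolding cprop_def by metis
  show ?case unfolding cprop_def
  proof (rule exI[of _ "Q1 \<union> Q2"], intro conjI allI impI)
    fix tb c K assume m: "map_of tb \<subseteq>\<^sub>m f" and d: "rf_decode c = Comp g h"
    note dd = dec_Comp[OF d]
    show "okr tb (Q1 \<union> Q2) (Ev c x K) (Rt z K)"
      apply (rule okr_step)
      apply (simp add: st_Ev dd Let_def)
      apply (rule okr_trans)
       apply (rule okr_mono[OF i1[OF m] Un_upper1], simp add: dd)
      apply (rule okr_step)
      apply simp
      apply (rule okr_mono[OF i2[OF m] Un_upper2], simp add: dd)
      done
  qed (use q in auto)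
next
  case (7 g x y h z)
  from "7.IH" obtain Q1 Q2 where q: "finite Q1" "Q1 \<subseteq> dom f" "finite Q2" "Q2 \<subseteq> dom f"
    and i1: "\<And>tb c K. map_of tb \<subseteq>\<^sub>m f \<Longrightarrow> rf_decode c = g \<Longrightarrow> okr tb Q1 (Ev c x K) (Rt y K)"
    and i2: "\<And>tb c K. map_of tb \<subseteq>\<^sub>m f \<Longrightarrow> rf_decode c = h \<Longrightarrow> okr tb Q2 (Ev c x K) (Rt z K)"
    unfolding cprop_def by metis
  show ?case unfolding cprop_def
  proof (rule exI[of _ "Q1 \<union> Q2"], intro conjI allI impI)
    fix tb c K assume m: "map_of tb \<subseteq>\<^sub>m f" and d: "rf_decode c = Pair g h"
    note dd = dec_Pair[OF d]
    show "okr tb (Q1 \<union> Q2) (Ev c x K) (Rt (pe y z) K)"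
      apply (rule okr_step)
      apply (simp add: st_Ev dd Let_def)
      apply (rule okr_trans)
       apply (rule okr_mono[OF i1[OF m] Un_upper1], simp add: dd)
      apply (rule okr_step)
      apply simp
      apply (rule okr_trans)
       apply (rule okr_mono[OF i2[OF m] Un_upper2], simp add: dd)
      apply (rule okr_step)
      apply simp
      done
  qed (use q in auto)
next
  case (8 g x y h)
  from "8.IH" obtain Q1 where q: "finite Q1" "Q1 \<subseteq> dom f"
    and i1: "\<And>tb c K. map_of tb \<subseteq>\<^sub>m f \<Longrightarrow> rf_decode c = g \<Longrightarrow> okr tb Q1 (Ev c x K) (Rt y K)"
    unfolding cprop_def by metis
  show ?case unfolding cprop_def
  proof (rule exI[of _ "Q1"], intro conjI allI impI)
    fix tb c K assume m: "map_of tb \<subseteq>\<^sub>m f" and d: "rf_decode c = Rec g h"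
    note dd = dec_Rec[OF d]
    show "okr tb Q1 (Ev c (pe x 0) K) (Rt y K)"
      apply (rule okr_step)
      apply (simp add: st_Ev dd Let_def)
      apply (rule okr_trans)
       apply (rule i1[OF m], simp add: dd)
      apply (rule okr_step)
      apply simp
      done
  next
    fix g' h' x' n tb cg ch N K
    assume "Rec g h = Rec g' h'" "pe x 0 = pe x' n" "map_of tb \<subseteq>\<^sub>m f" "rf_decode cg = g'"
    then show "okr tb Q1 (Ev cg x' (cons (FR ch x' 0 N) K)) (Rt y (cons (FR ch x' n N) K))"
      using i1 by auto
  qed (use q in auto)
next
  case (9 g h x n y z)
  from "9.IH" obtain Q1 Q2 where q: "finite Q1" "Q1 \<subseteq> dom f" "finite Q2" "Q2 \<subseteq> dom f"
    and i1: "\<And>tb cg ch N K. map_of tb \<subseteq>\<^sub>m f \<Longrightarrow> rf_decode cg = g \<Longrightarrow> rf_decode ch = h \<Longrightarrow> n \<le> N \<Longrightarrow>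
           okr tb Q1 (Ev cg x (cons (FR ch x 0 N) K)) (Rt y (cons (FR ch x n N) K))"
    and i2: "\<And>tb c K. map_of tb \<subseteq>\<^sub>m f \<Longrightarrow> rf_decode c = h \<Longrightarrow> okr tb Q2 (Ev c (pe x (pe n y)) K) (Rt z K)"
    unfolding cprop_def by (metis (no_types, lifting))
  have ext: "okr tb (Q1 \<union> Q2) (Ev cg x (cons (FR ch x 0 N) K)) (Rt z (cons (FR ch x (Suc n) N) K))"
    if m: "map_of tb \<subseteq>\<^sub>m f" and "rf_decode cg = g" "rf_decode ch = h" "Suc n \<le> N" for tb cg ch N K
    apply (rule okr_trans)
     apply (rule okr_mono[OF i1[OF m] Un_upper1]; (simp add: that)?)
     using that apply simp
    apply (rule okr_step)
    using that apply simp
    apply (rule okr_mono[OF i2[OF m] Un_upper2], simp add: that)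
    done
  show ?case unfolding cprop_def
  proof (rule exI[of _ "Q1 \<union> Q2"], intro conjI allI impI)
    fix tb c K assume m: "map_of tb \<subseteq>\<^sub>m f" and d: "rf_decode c = Rec g h"
    note dd = dec_Rec[OF d]
    show "okr tb (Q1 \<union> Q2) (Ev c (pe x (Suc n)) K) (Rt z K)"
      apply (rule okr_step)
      apply (simp add: st_Ev dd Let_def)
      apply (rule okr_trans)
       apply (rule ext[OF m], simp_all add: dd)
      apply (rule okr_step)
      apply simp
      done
  next
    fix g' h' x' n' tb cg ch N K
    assume "Rec g h = Rec g' h'" "pe x (Suc n) = pe x' n'" "map_of tb \<subseteq>\<^sub>m f" "rf_decode cg = g'"
      "rf_decode ch = h'" "n' \<le> N"
    then show "okr tb (Q1 \<union> Q2) (Ev cg x' (cons (FR ch x' 0 N) K)) (Rt z (cons (FR ch x' n' N) K))"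
      using ext by auto
  qed (use q in auto)
next
  case (10 g x n)
  from "10.IH"(1) obtain Q0 where q0: "finite Q0" "Q0 \<subseteq> dom f"
    and i0: "\<And>tb c K. map_of tb \<subseteq>\<^sub>m f \<Longrightarrow> rf_decode c = g \<Longrightarrow> okr tb Q0 (Ev c (pe x n) K) (Rt 0 K)"
    unfolding cprop_def by metis
  have "\<forall>k. \<exists>p. k < n \<longrightarrow> (fst p \<noteq> 0 \<and> finite (snd p) \<and> snd p \<subseteq> dom f \<and>
     (\<forall>tb c K. map_of tb \<subseteq>\<^sub>m f \<longrightarrow> rf_decode c = g \<longrightarrow> okr tb (snd p) (Ev c (pe x k) K) (Rt (fst p) K)))"
  proof
    fix k
    show "\<exists>p. k < n \<longrightarrow> (fst p \<noteq> 0 \<and> finite (snd p) \<and> snd p \<subseteq> dom f \<and>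
     (\<forall>tb c K. map_of tb \<subseteq>\<^sub>m f \<longrightarrow> rf_decode c = g \<longrightarrow> okr tb (snd p) (Ev c (pe x k) K) (Rt (fst p) K)))"
    proof (cases "k < n")
      case True
      then obtain y where "y \<noteq> 0" "cprop f g (pe x k) y" using "10.IH"(2) by blast
      then show ?thesis unfolding cprop_def by (metis fst_conv snd_conv)
    qed simp
  qed
  then obtain YQ where yq: "\<And>k. k < n \<Longrightarrow> fst (YQ k) \<noteq> 0 \<and> finite (snd (YQ k)) \<and> snd (YQ k) \<subseteq> dom f \<and>
     (\<forall>tb c K. map_of tb \<subseteq>\<^sub>m f \<longrightarrow> rf_decode c = g \<longrightarrow> okr tb (snd (YQ k)) (Ev c (pe x k) K) (Rt (fst (YQ k)) K))"
    by (metis choice)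
  define Q where "Q = Q0 \<union> (\<Union>k<n. snd (YQ k))"
  have qf: "finite Q" "Q \<subseteq> dom f" unfolding Q_def using q0 yq by auto
  have main: "okr tb Q (Ev c x K) (Rt n K)" if m: "map_of tb \<subseteq>\<^sub>m f" and d: "rf_decode c = Mu g" for tb c K
  proof -
    note dd = dec_Mu[OF d]
    have loop: "okr tb Q (Ev c x K) (Ev (c div 9) (pe x j) (cons (FM (c div 9) x j) K))" if "j \<le> n" for j
      using that
    proof (induction j)
      case 0 show ?case
        apply (rule okr_step)
        apply (simp add: st_Ev dd Let_def)
        done
    next
      case (Suc j)
      then have j: "j < n" by simp
      have "okr tb (snd (YQ j)) (Ev (c div 9) (pe x j) (cons (FM (c div 9) x j) K)) (Rt (fst (YQ j)) (cons (FM (c div 9) x j) K))"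
        using yq[OF j] m dd by blast
      then have "okr tb Q (Ev (c div 9) (pe x j) (cons (FM (c div 9) x j) K)) (Rt (fst (YQ j)) (cons (FM (c div 9) x j) K))"
        by (rule okr_mono) (use j in \<open>auto simp: Q_def\<close>)
      moreover have "okr tb Q (Rt (fst (YQ j)) (cons (FM (c div 9) x j) K)) (Ev (c div 9) (pe x (Suc j)) (cons (FM (c div 9) x (Suc j)) K))"
        apply (rule okr_step) using yq[OF j] by simp
      ultimately show ?case using Suc okr_trans by (metis Suc_leD)
    qed
    have "okr tb Q (Ev (c div 9) (pe x n) (cons (FM (c div 9) x n) K)) (Rt 0 (cons (FM (c div 9) x n) K))"
      by (rule okr_mono[OF i0[OF m]]) (use dd in \<open>auto simp: Q_def\<close>)
    moreover have "okr tb Q (Rt 0 (cons (FM (c div 9) x n) K)) (Rt n K)"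
      by (rule okr_step) simp
    ultimately show ?thesis using loop[of n] okr_trans by blast
  qed
  show ?case unfolding cprop_def
    by (rule exI[of _ Q]) (use qf main in auto)
qed




lemma pcomp_tot: "tot G \<Longrightarrow> pcomp (\<lambda>f x. Some (G x))"
  unfolding tot_def pcomp_def by auto

lemma pcomp_bind:
  assumes "pcomp A" "pcomp (\<lambda>f z. B f (p1 z) (p2 z))"
  shows "pcomp (\<lambda>f x. Option.bind (A f x) (B f x))"
proof -
  obtain ca cb where a: "\<And>f x y. A f x = Some y \<Longrightarrow> rf_eval f ca x y"
    and b: "\<And>f z y. B f (p1 z) (p2 z) = Some y \<Longrightarrow> rf_eval f cb z y"
    using assms unfolding pcomp_def by metis
  have "rf_eval f (Comp cb (Pair (Pair Fst Snd) ca)) x y" if "(Option.bind (A f x) (B f x)) = Some y" for f x y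
  proof -
    from that obtain u where u: "A f x = Some u" "B f x u = Some y" by (cases "A f x") auto
    have "rf_eval f (Pair (Pair Fst Snd) ca) x (pe x u)"
      by (metis ev_Fst ev_Pair ev_Snd pe_p12 a u(1))
    moreover have "rf_eval f cb (pe x u) y" using b[of f "pe x u"] u(2) by simp
    ultimately show ?thesis by (rule ev_Comp)
  qed
  then show ?thesis unfolding pcomp_def by blast
qed

primrec piter :: "(nat \<Rightarrow> nat \<Rightarrow> nat option) \<Rightarrow> nat \<Rightarrow> nat option \<Rightarrow> nat option" where
  "piter S 0 a = a"
| "piter S (Suc n) a = Option.bind (piter S n a) (S n)"

lemma pcomp_piter:
  assumes "pcomp A" "pcomp (\<lambda>f z. S f (p1 z) (p1 (p2 z)) (p2 (p2 z)))" "tot N"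
  shows "pcomp (\<lambda>f x. piter (S f x) (N x) (A f x))"
proof -
  obtain ca cs cn where a: "\<And>f x y. A f x = Some y \<Longrightarrow> rf_eval f ca x y"
    and s: "\<And>f z y. S f (p1 z) (p1 (p2 z)) (p2 (p2 z)) = Some y \<Longrightarrow> rf_eval f cs z y"
    and n: "\<And>f x. rf_eval f cn x (N x)"
    using assms unfolding pcomp_def tot_def by metis
  have r: "piter (S f x) k (A f x) = Some y \<Longrightarrow> rf_eval f (Rec ca cs) (pe x k) y" for f x k y
  proof (induction k arbitrary: y)
    case 0 then show ?case using a by (auto intro: ev_Rec0)
  next
    case (Suc k)
    then obtain u where u: "piter (S f x) k (A f x) = Some u" "S f x k u = Some y"
      by (cases "piter (S f x) k (A f x)") auto
    show ?case
      by (rule ev_RecS[OF Suc.IH[OF u(1)]]) (use s[of f "pe x (pe k u)"] u(2) in simp)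
  qed
  have "rf_eval f (Comp (Rec ca cs) (Pair (Pair Fst Snd) cn)) x y" if "piter (S f x) (N x) (A f x) = Some y" for f x y
  proof -
    have "rf_eval f (Pair (Pair Fst Snd) cn) x (pe x (N x))"
      by (metis ev_Fst ev_Pair ev_Snd pe_p12 n)
    then show ?thesis using r[OF that] by (rule ev_Comp)
  qed
  then show ?thesis unfolding pcomp_def by blast
qed

definition pmu :: "(nat \<Rightarrow> nat option) \<Rightarrow> nat \<Rightarrow> nat option" where
  "pmu P x = (if \<exists>n. P (pe x n) = Some 0 \<and> (\<forall>k<n. \<exists>y. y \<noteq> 0 \<and> P (pe x k) = Some y)
     then Some (LEAST n. P (pe x n) = Some 0) else None)"

lemma pmu_eq:
  assumes "P (pe x n) = Some 0" "\<forall>k<n. \<exists>y. y \<noteq> 0 \<and> P (pe x k) = Some y"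
  shows "pmu P x = Some n"
proof -
  have "(LEAST n. P (pe x n) = Some 0) = n"
  proof (rule Least_equality)
    show "P (pe x n) = Some 0" by fact
    fix m assume "P (pe x m) = Some 0"
    then show "n \<le> m" using assms(2) by (metis leI option.inject)
  qed
  then show ?thesis unfolding pmu_def using assms by auto
qed

lemma pcomp_pmu:
  assumes "pcomp P"
  shows "pcomp (\<lambda>f x. pmu (P f) x)"
proof -
  obtain cp where p: "\<And>f x y. P f x = Some y \<Longrightarrow> rf_eval f cp x y"
    using assms unfolding pcomp_def by metis
  have "rf_eval f (Mu cp) x y" if "pmu (P f) x = Some y" for f x y
  proof -
    from that obtain n where n: "P f (pe x n) = Some 0" "\<forall>k<n. \<exists>y. y \<noteq> 0 \<and> P f (pe x k) = Some y"
      unfolding pmu_def by (auto split: if_splits)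
    then have "y = n" using that pmu_eq by (metis option.inject)
    moreover have "\<forall>k<n. \<exists>y. y \<noteq> 0 \<and> rf_eval f cp (pe x k) y" using n(2) p by blast
    ultimately show ?thesis using ev_Mu[OF p[OF n(1)]] by simp
  qed
  then show ?thesis unfolding pcomp_def by blast
qed

lemma pcomp_orc: "pcomp (\<lambda>f x. f x)"
  unfolding pcomp_def by (blast intro: ev_Orc)

lemma pcomp_orc_app: "tot E \<Longrightarrow> pcomp (\<lambda>f x. f (E x))"
proof -
  assume "tot E"
  then obtain ce where e: "\<And>f x. rf_eval f ce x (E x)" unfolding tot_def by metis
  show ?thesis unfolding pcomp_def
    by (rule exI[of _ "Comp Orc ce"]) (auto intro: ev_Comp[OF e ev_Orc])
qed


lemma pcomp_compose: "pcomp G \<Longrightarrow> tot E \<Longrightarrow> pcomp (\<lambda>f x. G f (E x))"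
proof -
  assume "pcomp G" "tot E"
  then obtain cg ce where g: "\<And>f x y. G f x = Some y \<Longrightarrow> rf_eval f cg x y"
    and e: "\<And>f x. rf_eval f ce x (E x)" unfolding pcomp_def tot_def by metis
  show ?thesis unfolding pcomp_def
    by (rule exI[of _ "Comp cg ce"]) (auto intro: ev_Comp[OF e g])
qed

lemma pcomp_search:
  assumes "tot P" "tot E"
  shows "pcomp (\<lambda>f x. if \<exists>n. P (pe x n) = 0 then Some (E (pe x (LEAST n. P (pe x n) = 0))) else None)"
proof -
  have eq: "pmu (\<lambda>z. Some (P z)) x = (if \<exists>n. P (pe x n) = 0 then Some (LEAST n. P (pe x n) = 0) else None)" for x
  proof (cases "\<exists>n. P (pe x n) = 0")
    case True
    define n where "n = (LEAST n. P (pe x n) = 0)"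
    have "P (pe x n) = 0" unfolding n_def using True by (rule LeastI_ex)
    moreover have "\<forall>k<n. \<exists>y. y \<noteq> 0 \<and> Some (P (pe x k)) = Some y"
      unfolding n_def by (auto dest: not_less_Least)
    ultimately have "pmu (\<lambda>z. Some (P z)) x = Some n" by (intro pmu_eq) auto
    then show ?thesis using True by (simp add: n_def)
  next
    case False then show ?thesis unfolding pmu_def by auto
  qed
  have "pcomp (\<lambda>f x. Option.bind (pmu (\<lambda>z. Some (P z)) x) (\<lambda>n. Some (E (pe x n))))"
  proof (rule pcomp_bind)
    show "pcomp (\<lambda>f. pmu (\<lambda>z. Some (P z)))"
      using pcomp_pmu[of "\<lambda>f z. Some (P z)"] pcomp_tot[OF assms(1)] by simp
    show "pcomp (\<lambda>f z. Some (E (pe (p1 z) (p2 z))))"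
      using pcomp_tot[OF assms(2)] by simp
  qed
  moreover have "Option.bind (pmu (\<lambda>z. Some (P z)) x) (\<lambda>n. Some (E (pe x n))) =
     (if \<exists>n. P (pe x n) = 0 then Some (E (pe x (LEAST n. P (pe x n) = 0))) else None)" for x
    unfolding eq by simp
  ultimately show ?thesis by simp
qed

definition run :: "nat \<Rightarrow> nat \<Rightarrow> nat \<Rightarrow> nat" where
  "run t s n = (nstep t ^^ n) s"

definition final :: "nat \<Rightarrow> bool" where
  "final s \<longleftrightarrow> (p1 s = 1 \<and> p2 (p2 s) = 0) \<or> p1 s = 3"

lemma final_fix: "final s \<Longrightarrow> nstep t s = s"
proof -
  assume "final s"
  then consider "s = Rt (p1 (p2 s)) 0" | "s = Hl (p2 s)"
    unfolding final_def Rt_def Hl_def by (metis pe_p12)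
  then show ?thesis by cases (metis st_Rt0, metis st_Hl)
qed

lemma final_Rt[simp]: "final (Rt y 0)" and final_Hl[simp]: "final (Hl v)"
  unfolding final_def Rt_def Hl_def by simp_all

lemma final_run: "final s \<Longrightarrow> (nstep t ^^ k) s = s"
  by (induction k) (auto simp: final_fix)

lemma tot_nstep2: "tot A \<Longrightarrow> tot B \<Longrightarrow> tot (\<lambda>x. nstep (A x) (B x))"
  by (rule tot_app2[OF tot_nstep])

lemma tot_run: "tot A \<Longrightarrow> tot B \<Longrightarrow> tot N \<Longrightarrow> tot (\<lambda>x. run (A x) (B x) (N x))"
  unfolding run_def
  by (rule tot_iter[of N B "\<lambda>x. nstep (A x)"]; (assumption)?)
     (rule tot_nstep2[OF tot_comp[of A p1] tot_p2[OF tot_id]], assumption, rule tot_p1[OF tot_id])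

lemma tpred_final: "tot A \<Longrightarrow> tpred (\<lambda>x. final (A x))"
  unfolding final_def by (intro tpred_disj tpred_conj tpred_eq tot_p1 tot_p2 tot_const)

definition "RR z n = run (p1 z) (Ev (p1 (p2 z)) (p2 (p2 z)) 0) n"

definition Resn :: "nat \<Rightarrow> nat option" where
  "Resn z = (if \<exists>n. final (RR z n) then Some (RR z (LEAST n. final (RR z n))) else None)"

lemma pcomp_Resn0: "pcomp (\<lambda>f. Resn)"
proof -
  have t1: "tot (\<lambda>w. if final (RR (p1 w) (p2 w)) then 0 else 1)"
    unfolding RR_def Ev_def by (intro tot_if tpred_final tot_run tot_pe tot_p1 tot_p2 tot_const tot_id)
  have t2: "tot (\<lambda>w. RR (p1 w) (p2 w))"
    unfolding RR_def Ev_def by (intro tot_run tot_pe tot_p1 tot_p2 tot_const tot_id)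
  have e: "((if b then 0 else Suc 0) = (0::nat)) = b" for b by simp
  show ?thesis using pcomp_search[OF t1 t2] unfolding Resn_def
    by (simp only: e p1_pe p2_pe One_nat_def)
qed

lemma pcomp_Resn: "tot E \<Longrightarrow> pcomp (\<lambda>f x. Resn (E x))"
  using pcomp_compose[OF pcomp_Resn0] .

lemma Resn_reach:
  assumes "reach t (Ev c x 0) s" "final s"
  shows "Resn (pe t (pe c x)) = Some s"
proof -
  obtain n where n: "RR (pe t (pe c x)) n = s" using assms(1) unfolding reach_def RR_def run_def by auto
  define m where "m = (LEAST n. final (RR (pe t (pe c x)) n))"
  have ex: "\<exists>n. final (RR (pe t (pe c x)) n)" using n assms(2) by auto
  have fm: "final (RR (pe t (pe c x)) m)" unfolding m_def using ex by (metis LeastI)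
  have "m \<le> n" unfolding m_def using n assms(2) by (simp add: Least_le)
  then have "RR (pe t (pe c x)) n = (nstep t ^^ (n - m)) (RR (pe t (pe c x)) m)"
  proof -
    have "(nstep t ^^ (n - m)) ((nstep t ^^ m) (Ev c x 0)) = (nstep t ^^ ((n - m) + m)) (Ev c x 0)"
      by (simp add: funpow_add)
    then show ?thesis unfolding RR_def run_def using \<open>m \<le> n\<close> by simp
  qed
  also have "\<dots> = RR (pe t (pe c x)) m" using fm final_run by blast
  finally show ?thesis unfolding Resn_def using ex n m_def by auto
qed

definition Ufn :: "nat \<Rightarrow> nat option" where
  "Ufn z = Option.bind (Resn (pe 0 z)) (\<lambda>s. Some (p1 (p2 s)))"

lemma pcomp_Ufn: "tot E \<Longrightarrow> pcomp (\<lambda>f x. Ufn (E x))"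
  unfolding Ufn_def
  apply (rule pcomp_bind[of "\<lambda>f x. Resn (pe 0 (E x))" "\<lambda>f x s. Some (p1 (p2 s))", simplified])
   apply (rule pcomp_Resn, intro tot_pe tot_const, assumption)
  apply (rule pcomp_tot, intro tot_p1 tot_p2 tot_id)
  done

lemma K1_rf: "K1 c x = Some y \<Longrightarrow> rf_eval (\<lambda>_. None) (rf_decode c) x y"
  unfolding K1_def K1f_def by (rule phi_Some)

lemma Ufn_K1:
  assumes "K1 c x = Some y" shows "Ufn (pe c x) = Some y"
proof -
  have "cprop (\<lambda>_. None) (rf_decode c) x y" using complete[OF K1_rf[OF assms]] .
  then obtain Q where qd: "Q \<subseteq> dom (\<lambda>_::nat. None::nat option)"
    and o': "\<forall>tb ca K. map_of tb \<subseteq>\<^sub>m (\<lambda>_. None) \<longrightarrow> rf_decode ca = rf_decode c \<longrightarrow> okr tb Q (Ev ca x K) (Rt y K)"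
    unfolding cprop_def by blast
  then have o: "okr [] Q (Ev c x 0) (Rt y 0)" by simp
  have "Q = {}" using qd by auto
  then have "reach 0 (Ev c x 0) (Rt y 0)" using o unfolding okr_def by simp
  then have "Resn (pe 0 (pe c x)) = Some (Rt y 0)" by (rule Resn_reach) simp
  then show ?thesis unfolding Ufn_def by (simp add: Rt_def)
qed

definition U2 :: "nat \<Rightarrow> nat \<Rightarrow> nat \<Rightarrow> nat option" where
  "U2 c a b = Option.bind (Ufn (pe c a)) (\<lambda>d. Ufn (pe d b))"

lemma U2_K1: "app2 K1 c a b = Some y \<Longrightarrow> U2 c a b = Some y"
  unfolding app2_def U2_def
  by (cases "K1 c a") (auto simp: Ufn_K1)

lemma pcomp_U2: "tot C \<Longrightarrow> tot A \<Longrightarrow> tot B \<Longrightarrow> pcomp (\<lambda>f x. U2 (C x) (A x) (B x))"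
  unfolding U2_def
  apply (rule pcomp_bind[of "\<lambda>f x. Ufn (pe (C x) (A x))" "\<lambda>f x d. Ufn (pe d (B x))"])
   apply (rule pcomp_Ufn, intro tot_pe; assumption)
  apply (rule pcomp_Ufn, rule tot_pe[OF tot_p2[OF tot_id] tot_comp[of B p1]], assumption, rule tot_p1[OF tot_id])
  done

section \<open>s-m-n\<close>

definition constc :: "nat \<Rightarrow> nat" where "constc k = ((\<lambda>c. 5 + 9 * pe 1 c) ^^ k) 0"

lemma dec5: "rf_decode (5 + 9 * m) = Comp (rf_decode (p1 m)) (rf_decode (p2 m))"
  by (subst rf_decode_eq) simp
lemma dec6: "rf_decode (6 + 9 * m) = Pair (rf_decode (p1 m)) (rf_decode (p2 m))"
  by (subst rf_decode_eq) simp
lemma dec_small: "rf_decode 0 = Zer" "rf_decode (Suc 0) = Succ" "rf_decode 2 = Fst" "rf_decode 3 = Snd"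
  by (subst rf_decode_eq; simp)+

lemma constc_eval: "rf_eval f (rf_decode (constc k)) x k"
proof (induction k)
  case 0 then show ?case by (simp add: constc_def dec_small ev_Zer)
next
  case (Suc k)
  have "constc (Suc k) = 5 + 9 * pe 1 (constc k)" by (simp add: constc_def)
  then show ?case using Suc by (simp add: dec5 dec_small) (rule ev_Comp[OF _ ev_Succ])
qed

definition smn :: "nat \<Rightarrow> nat \<Rightarrow> nat" where
  "smn C a = 5 + 9 * pe C (6 + 9 * pe (constc a) (6 + 9 * pe 2 3))"

lemma smn_eval: "rf_eval f (rf_decode C) (pe a x) y \<Longrightarrow> rf_eval f (rf_decode (smn C a)) x y"
  unfolding smn_def
  apply (simp add: dec5 dec6 dec_small)
  apply (rule ev_Comp[rotated], assumption)
  apply (rule ev_Pair[OF constc_eval])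
  apply (metis ev_Fst ev_Pair ev_Snd pe_p12)
  done

lemma tot_smn: "tot (smn C)"
proof -
  have "tot (\<lambda>a. smn C a)" unfolding smn_def constc_def
    apply (intro tot_plus tot_times tot_pe tot_const)
    apply (rule tot_iter[of "\<lambda>a. a" "\<lambda>a. 0" "\<lambda>x c. 5 + 9 * pe 1 c", OF tot_id tot_const])
    apply (intro tot_plus tot_times tot_pe tot_const tot_p2 tot_id)
    done
  then show ?thesis by simp
qed




lemma rel_app_SomeD:
  assumes "rel_app app f T F p enc a b = Some c"
  shows "\<exists>c'. rel_app_rel app f T F p enc a b c'"
  using assms unfolding rel_app_def by (auto split: if_splits)

lemma app2_Some_iff: "app2 app a b c = Some y \<longleftrightarrow> (\<exists>d. app a b = Some d \<and> app d c = Some y)"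
  unfolding app2_def by (cases "app a b") auto

section \<open>Direction 2: K1[f] to K1^f\<close>

definition "init2 SN E0 z = U2 SN E0 (p2 z)"
definition "step2 SN P1 f z k s = Option.bind (Ufn (pe (p1 z) s)) (\<lambda>w. Option.bind (Ufn (pe P1 w))
   (\<lambda>v. Option.bind (f v) (\<lambda>u. U2 SN s u)))"
definition "test2 SN E0 P1 P0 TT f z' = Option.bind (piter (step2 SN P1 f (p1 z')) (p2 z') (init2 SN E0 (p1 z')))
   (\<lambda>s. Option.bind (Ufn (pe (p1 (p1 z')) s)) (\<lambda>w. Option.bind (Ufn (pe P0 w)) (\<lambda>t. Some (if t = TT then 0 else 1))))"
definition "loop2 SN E0 P1 P0 TT f z = Option.bind (pmu (test2 SN E0 P1 P0 TT f) z)
   (\<lambda>N. Option.bind (piter (step2 SN P1 f z) N (init2 SN E0 z))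
     (\<lambda>s. Option.bind (Ufn (pe (p1 z) s)) (\<lambda>w. Ufn (pe P1 w))))"

lemmas pcomp_intros = pcomp_bind pcomp_Ufn pcomp_U2 pcomp_tot pcomp_piter pcomp_pmu pcomp_orc_app

lemma pcomp_loop2: "pcomp (loop2 SN E0 P1 P0 TT)"
proof -
  have "pcomp (\<lambda>f z. loop2 SN E0 P1 P0 TT f z)"
    unfolding loop2_def test2_def step2_def init2_def
    by (intro pcomp_intros tot_intros)
  then show ?thesis by simp
qed

section \<open>Direction 1 programs\<close>

definition "stage1 PR z a' k tb = Option.bind (Resn (pe tb (pe (p1 z) a')))
   (\<lambda>s. Option.bind (U2 PR (p2 z) (Suc k)) (\<lambda>u. Some (cons (pe (p2 s) u) tb)))"

definition "D1 LH PR PP TT FF f z = Option.bind (Ufn (pe LH (p2 z))) (\<lambda>L. Option.bind (U2 PR (p2 z) 0)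
   (\<lambda>a'. Option.bind (piter (stage1 PR z a') (L - 1) (Some 0)) (\<lambda>tb. Option.bind (Resn (pe tb (pe (p1 z) a')))
   (\<lambda>s. Option.bind (U2 PP FF (p2 s)) (\<lambda>qf. Option.bind (U2 PP TT (p1 (p2 s)))
   (\<lambda>qt. Some (if p1 s = 3 then qf else qt)))))))"

definition "R1 PR PP TT C f w = Option.bind (U2 PR w 0) (\<lambda>a. U2 PP TT (smn C a))"

lemma tot_smn_app: "tot A \<Longrightarrow> tot (\<lambda>x. smn C (A x))"
  by (rule tot_comp[OF tot_smn])

lemma pcomp_D1: "pcomp (D1 LH PR PP TT FF)"
proof -
  have "pcomp (\<lambda>f z. D1 LH PR PP TT FF f z)"
    unfolding D1_def stage1_def cons_def
    by (intro pcomp_intros pcomp_Resn tot_intros)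
  then show ?thesis by simp
qed

lemma pcomp_R1: "pcomp (R1 PR PP TT C)"
proof -
  have "pcomp (\<lambda>f z. R1 PR PP TT C f z)"
    unfolding R1_def
    by (intro pcomp_intros tot_smn_app tot_intros)
  then show ?thesis by simp
qed

definition TB :: "(nat \<Rightarrow> nat) \<Rightarrow> (nat \<Rightarrow> nat option) \<Rightarrow> nat \<Rightarrow> (nat \<times> nat) list" where
  "TB vs f i = map (\<lambda>k. (vs k, the (f (vs k)))) (rev [0..<i])"

lemma TB_Suc: "TB vs f (Suc i) = (vs i, the (f (vs i))) # TB vs f i"
  unfolding TB_def by simp

lemma TB_cong: "(\<And>k. k < i \<Longrightarrow> vs k = vs' k) \<Longrightarrow> TB vs f i = TB vs' f i"
  unfolding TB_def by auto

lemma TB_le: "(\<And>k. k < i \<Longrightarrow> f (vs k) \<noteq> None) \<Longrightarrow> map_of (TB vs f i) \<subseteq>\<^sub>m f"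
  unfolding map_le_def TB_def
proof (intro ballI)
  fix a assume h: "\<And>k. k < i \<Longrightarrow> f (vs k) \<noteq> None"
    and a: "a \<in> dom (map_of (map (\<lambda>k. (vs k, the (f (vs k)))) (rev [0..<i])))"
  then obtain y where y: "map_of (map (\<lambda>k. (vs k, the (f (vs k)))) (rev [0..<i])) a = Some y" by auto
  then have "(a, y) \<in> set (map (\<lambda>k. (vs k, the (f (vs k)))) (rev [0..<i]))" by (rule map_of_SomeD)
  then obtain k where "k < i" "a = vs k" "y = the (f (vs k))" by auto
  then show "map_of (map (\<lambda>k. (vs k, the (f (vs k)))) (rev [0..<i])) a = f a" using y h by auto
qed

lemma TB_None: "map_of (TB vs f i) v = None \<longleftrightarrow> (\<forall>k<i. vs k \<noteq> v)"
proof -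
  have "fst ` set (TB vs f i) = vs ` {..<i}" unfolding TB_def by (auto simp: image_image)
  then show ?thesis by (simp add: map_of_eq_None_iff) blast
qed

lemma stages:
  assumes fin: "finite Q" and Qd: "Q \<subseteq> dom f"
    and ok: "\<And>tb. map_of tb \<subseteq>\<^sub>m f \<Longrightarrow> okr tb Q (Ev a x 0) (Rt c 0)"
  shows "\<exists>M vs. (\<forall>i<M. Resn (pe (tenc (TB vs f i)) (pe a x)) = Some (Hl (vs i)) \<and> f (vs i) \<noteq> None)
     \<and> Resn (pe (tenc (TB vs f M)) (pe a x)) = Some (Rt c 0)"
proof (rule ccontr)
  assume nex: "\<not> ?thesis"
  have okres: "Resn (pe (tenc tb) (pe a x)) = Some (Rt c 0) \<or>
      (\<exists>v\<in>Q. map_of tb v = None \<and> Resn (pe (tenc tb) (pe a x)) = Some (Hl v))"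
    if "map_of tb \<subseteq>\<^sub>m f" for tb
  proof -
    have "okr tb Q (Ev a x 0) (Rt c 0)" using ok[OF that] .
    then consider "reach (tenc tb) (Ev a x 0) (Rt c 0)"
      | v where "v \<in> Q" "map_of tb v = None" "reach (tenc tb) (Ev a x 0) (Hl v)"
      unfolding okr_def by blast
    then show ?thesis
    proof cases
      case 1 then show ?thesis using Resn_reach[OF 1 final_Rt] by blast
    next
      case (2 v) then show ?thesis using Resn_reach[OF 2(3) final_Hl] by blast
    qed
  qed
  have G: "\<exists>vs. \<forall>i<n. Resn (pe (tenc (TB vs f i)) (pe a x)) = Some (Hl (vs i)) \<and> f (vs i) \<noteq> None
     \<and> vs i \<in> Q \<and> (\<forall>j<i. vs j \<noteq> vs i)" for n
  proof (induction n)
    case 0 then show ?case by simp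
  next
    case (Suc n)
    then obtain vs where vs: "\<forall>i<n. Resn (pe (tenc (TB vs f i)) (pe a x)) = Some (Hl (vs i)) \<and> f (vs i) \<noteq> None
     \<and> vs i \<in> Q \<and> (\<forall>j<i. vs j \<noteq> vs i)" by blast
    have le: "map_of (TB vs f n) \<subseteq>\<^sub>m f" by (rule TB_le) (use vs in auto)
    have ne: "Resn (pe (tenc (TB vs f n)) (pe a x)) \<noteq> Some (Rt c 0)"
    proof
      assume e: "Resn (pe (tenc (TB vs f n)) (pe a x)) = Some (Rt c 0)"
      have "\<exists>M vs. (\<forall>i<M. Resn (pe (tenc (TB vs f i)) (pe a x)) = Some (Hl (vs i)) \<and> f (vs i) \<noteq> None)
        \<and> Resn (pe (tenc (TB vs f M)) (pe a x)) = Some (Rt c 0)"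
        by (rule exI[of _ n], rule exI[of _ vs]) (use vs e in simp)
      then show False using nex by blast
    qed
    have "\<exists>v\<in>Q. map_of (TB vs f n) v = None \<and> Resn (pe (tenc (TB vs f n)) (pe a x)) = Some (Hl v)"
      using okres[OF le] ne by simp
    then obtain v where v: "v \<in> Q" "map_of (TB vs f n) v = None" "Resn (pe (tenc (TB vs f n)) (pe a x)) = Some (Hl v)"
      by (elim bexE conjE)
    define vs' where "vs' = vs(n := v)"
    have eq: "TB vs' f i = TB vs f i" if "i \<le> n" for i
      by (rule TB_cong) (use that in \<open>auto simp: vs'_def\<close>)
    have "\<forall>i<Suc n. Resn (pe (tenc (TB vs' f i)) (pe a x)) = Some (Hl (vs' i)) \<and> f (vs' i) \<noteq> None
     \<and> vs' i \<in> Q \<and> (\<forall>j<i. vs' j \<noteq> vs' i)"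
    proof (intro allI impI)
      fix i assume i: "i < Suc n"
      show "Resn (pe (tenc (TB vs' f i)) (pe a x)) = Some (Hl (vs' i)) \<and> f (vs' i) \<noteq> None
        \<and> vs' i \<in> Q \<and> (\<forall>j<i. vs' j \<noteq> vs' i)"
      proof (cases "i = n")
        case True
        then show ?thesis using v Qd eq[of n] TB_None[of vs f n v] by (auto simp: vs'_def)
      next
        case False
        then have "i < n" using i by simp
        then show ?thesis using vs eq[of i] by (auto simp: vs'_def)
      qed
    qed
    then show ?case by blast
  qed
  from G[of "Suc (card Q)"] obtain vs where vs0: "\<forall>i<Suc (card Q). Resn (pe (tenc (TB vs f i)) (pe a x)) = Some (Hl (vs i)) \<and> f (vs i) \<noteq> None
     \<and> vs i \<in> Q \<and> (\<forall>j<i. vs j \<noteq> vs i)" by (elim exE)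
  have vs: "\<forall>i<Suc (card Q). vs i \<in> Q \<and> (\<forall>j<i. vs j \<noteq> vs i)"
    using vs0 by simp
  have "inj_on vs {..<Suc (card Q)}"
  proof (rule inj_onI)
    fix i j assume ij: "i \<in> {..<Suc (card Q)}" "j \<in> {..<Suc (card Q)}" "vs i = vs j"
    have a1: "\<forall>j'<j. vs j' \<noteq> vs j" using vs ij(2) by simp
    have a2: "\<forall>j'<i. vs j' \<noteq> vs i" using vs ij(1) by simp
    show "i = j"
    proof (cases i j rule: linorder_cases)
      case less from a1[rule_format, OF less] ij(3) show ?thesis by simp
    next
      case greater from a2[rule_format, OF greater] ij(3) show ?thesis by simp
    qed
  qed
  then have "card (vs ` {..<Suc (card Q)}) = Suc (card Q)" by (simp add: card_image)
  moreover have "vs ` {..<Suc (card Q)} \<subseteq> Q" using vs by auto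
  ultimately show False using card_mono[OF fin, of "vs ` {..<Suc (card Q)}"] by simp
qed

lemma K1_of_pcomp:
  assumes hC: "\<forall>g x y. G g x = Some y \<longrightarrow> rf_eval g (rf_decode C) x y"
    and "G (\<lambda>_. None) (pe a w) = Some y"
  shows "K1 (smn C a) w = Some y"
proof -
  have "rf_eval (\<lambda>_. None) (rf_decode C) (pe a w) y" using hC assms(2) by blast
  then have "rf_eval (\<lambda>_. None) (rf_decode (smn C a)) w y" by (rule smn_eval)
  then show ?thesis unfolding K1_def K1f_def by (rule phi_eq)
qed

lemma p_Hl[simp]: "p1 (Hl v) = 3" "p2 (Hl v) = v" by (simp_all add: Hl_def)
lemma p_Rt[simp]: "p1 (Rt y K) = 1" "p2 (Rt y K) = pe y K" by (simp_all add: Rt_def)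
lemma tenc_TB_Suc: "tenc (TB vs f (Suc k)) = cons (pe (vs k) (the (f (vs k)))) (tenc (TB vs f k))"
  by (simp add: TB_Suc)

context
  fixes T F p :: nat and enc :: "nat list \<Rightarrow> nat" and q0 q1 lh pr sn :: nat
  assumes hT: "\<forall>x y. app2 K1 T x y = Some x" and hF: "\<forall>x y. app2 K1 F x y = Some y"
    and hp: "\<forall>x y. app2 K1 p x y \<noteq> None"
    and hp01: "\<forall>x y z. app2 K1 p x y = Some z \<longrightarrow> K1 q0 z = Some x \<and> K1 q1 z = Some y"
    and henc: "inj enc" and hlh: "\<forall>us. K1 lh (enc us) = Some (length us)"
    and hpr: "\<forall>us i. i < length us \<longrightarrow> app2 K1 pr (enc us) i = Some (us ! i)"
    and hsn: "\<forall>us x. app2 K1 sn (enc us) x = Some (enc (us @ [x]))"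
begin

lemma TF_ne: "T \<noteq> F"
proof
  assume "T = F"
  then have "app2 K1 T 0 1 = Some 1" using hF by simp
  then show False using hT by simp
qed

lemma pair_inj: "app2 K1 p x y = app2 K1 p x' y' \<Longrightarrow> x = x' \<and> y = y'"
proof -
  assume e: "app2 K1 p x y = app2 K1 p x' y'"
  obtain z where z: "app2 K1 p x y = Some z" using hp by blast
  then have "app2 K1 p x' y' = Some z" using e by simp
  then show ?thesis using z hp01 by (metis option.inject)
qed

lemma dial_prefix:
  assumes "is_dialogue K1 f F p enc a b us" "is_dialogue K1 f F p enc a b us'"
  shows "i \<le> length us \<Longrightarrow> i \<le> length us' \<Longrightarrow> take i us = take i us'"
proof (induction i)
  case 0 then show ?case by simp
next
  case (Suc i)
  then have i: "i < length us" "i < length us'" by auto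
  obtain v where v: "K1 a (enc (b # take i us)) = app2 K1 p F v" "f v = Some (us ! i)"
    using assms(1) i unfolding is_dialogue_def by blast
  obtain v' where v': "K1 a (enc (b # take i us')) = app2 K1 p F v'" "f v' = Some (us' ! i)"
    using assms(2) i unfolding is_dialogue_def by blast
  have "take i us = take i us'" using Suc by simp
  then have "v = v'" using v v' pair_inj by metis
  then have "us ! i = us' ! i" using v v' by simp
  then show ?case using Suc i by (simp add: take_Suc_conv_app_nth)
qed

lemma rel_unique:
  assumes "rel_app_rel K1 f T F p enc a b c" "rel_app_rel K1 f T F p enc a b c'"
  shows "c = c'"
proof -
  obtain us where u: "is_dialogue K1 f F p enc a b us" "K1 a (enc (b # us)) = app2 K1 p T c"
    using assms(1) unfolding rel_app_rel_def by blast
  obtain us' where u': "is_dialogue K1 f F p enc a b us'" "K1 a (enc (b # us')) = app2 K1 p T c'"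
    using assms(2) unfolding rel_app_rel_def by blast
  have ne: False if h: "length us < length us'" "is_dialogue K1 f F p enc a b us" "is_dialogue K1 f F p enc a b us'"
     "K1 a (enc (b # us)) = app2 K1 p T c" for us us' c
  proof -
    have "take (length us) us' = us" using dial_prefix[OF h(2,3), of "length us"] h(1) by simp
    moreover obtain v where "K1 a (enc (b # take (length us) us')) = app2 K1 p F v"
      using h(1,3) unfolding is_dialogue_def by blast
    ultimately have "app2 K1 p T c = app2 K1 p F v" using h(4) by simp
    then show False using pair_inj TF_ne by blast
  qed
  have "length us = length us'" using ne u u' by (metis linorder_neqE_nat)
  then have "us = us'" using dial_prefix[OF u(1) u'(1), of "length us"] by simp
  then show ?thesis using u u' pair_inj by metis
qed

lemma rel_app_eq: "rel_app_rel K1 f T F p enc a b c \<Longrightarrow> rel_app K1 f T F p enc a b = Some c"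
  unfolding rel_app_def using rel_unique by (auto intro: the_equality)

lemma rel_app_Some: "rel_app K1 f T F p enc a b = Some c \<Longrightarrow> rel_app_rel K1 f T F p enc a b c"
  by (metis rel_app_SomeD rel_app_eq option.inject)


lemma loop2_correct:
  assumes "rel_app_rel K1 f T F p enc b b' c"
  shows "loop2 sn (enc []) q1 q0 T f (pe b b') = Some c"
proof -
  obtain us where d: "is_dialogue K1 f F p enc b b' us" and fin: "K1 b (enc (b' # us)) = app2 K1 p T c"
    using assms unfolding rel_app_rel_def by blast
  define z where "z = pe b b'"
  define M where "M = length us"
  have st: "piter (step2 sn q1 f z) i (init2 sn (enc []) z) = Some (enc (b' # take i us))" if "i \<le> M" for i
    using that
  proof (induction i)
    case 0
    have "U2 sn (enc []) b' = Some (enc ([] @ [b']))" using hsn U2_K1 by blast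
    then show ?case by (simp add: init2_def z_def)
  next
    case (Suc i)
    then have i: "i < length us" unfolding M_def by simp
    obtain v where v: "K1 b (enc (b' # take i us)) = app2 K1 p F v" "f v = Some (us ! i)"
      using d i unfolding is_dialogue_def by blast
    obtain w where w: "app2 K1 p F v = Some w" using hp by blast
    have "Ufn (pe b (enc (b' # take i us))) = Some w" using v w Ufn_K1 by simp
    moreover have "Ufn (pe q1 w) = Some v" using hp01 w Ufn_K1 by blast
    moreover have "U2 sn (enc (b' # take i us)) (us ! i) = Some (enc ((b' # take i us) @ [us ! i]))"
      using hsn U2_K1 by blast
    ultimately have "step2 sn q1 f z i (enc (b' # take i us)) = Some (enc (b' # take (Suc i) us))"
      unfolding step2_def z_def using v(2) i by (simp add: take_Suc_conv_app_nth)
    then show ?case using Suc by simp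
  qed
  have t1: "test2 sn (enc []) q1 q0 T f (pe z k) = Some 1" if kM: "k < M" for k
  proof -
    obtain v where v: "K1 b (enc (b' # take k us)) = app2 K1 p F v"
      using d kM unfolding is_dialogue_def M_def by blast
    obtain w where w: "app2 K1 p F v = Some w" using hp by blast
    have "Ufn (pe b (enc (b' # take k us))) = Some w" using v w Ufn_K1 by simp
    moreover have "Ufn (pe q0 w) = Some F" using hp01 w Ufn_K1 by blast
    ultimately show ?thesis unfolding test2_def using st[of k] kM TF_ne by (simp add: z_def)
  qed
  obtain w where w: "app2 K1 p T c = Some w" using hp by blast
  have uw: "Ufn (pe b (enc (b' # us))) = Some w" using fin w Ufn_K1 by simp
  have t0: "test2 sn (enc []) q1 q0 T f (pe z M) = Some 0"
  proof -
    have "Ufn (pe q0 w) = Some T" using hp01 w Ufn_K1 by blast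
    then show ?thesis unfolding test2_def using st[of M] uw by (simp add: z_def M_def)
  qed
  have "pmu (test2 sn (enc []) q1 q0 T f) z = Some M"
    by (rule pmu_eq) (use t0 t1 in auto)
  moreover have "Ufn (pe q1 w) = Some c" using hp01 w Ufn_K1 by blast
  ultimately show ?thesis unfolding loop2_def using st[of M] uw
    by (simp add: M_def) (simp add: z_def)
qed


lemma dir1_dialogue:
  assumes hC: "\<forall>g x y. D1 lh pr p T F g x = Some y \<longrightarrow> rf_eval g (rf_decode C) x y"
    and ph: "phi f a a' = Some c"
  shows "rel_app_rel K1 f T F p enc (smn C a) a' c"
proof -
  have "cprop f (rf_decode a) a' c" using complete[OF phi_Some[OF ph]] .
  then obtain Q where Q: "finite Q" "Q \<subseteq> dom f"
    and ok: "\<forall>tb c' K. map_of tb \<subseteq>\<^sub>m f \<longrightarrow> rf_decode c' = rf_decode a \<longrightarrow> okr tb Q (Ev c' a' K) (Rt c K)"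
    unfolding cprop_def by blast
  have "\<And>tb. map_of tb \<subseteq>\<^sub>m f \<Longrightarrow> okr tb Q (Ev a a' 0) (Rt c 0)" using ok by blast
  from stages[OF Q this] obtain M vs where
    st1: "\<forall>i<M. Resn (pe (tenc (TB vs f i)) (pe a a')) = Some (Hl (vs i)) \<and> f (vs i) \<noteq> None"
    and st2: "Resn (pe (tenc (TB vs f M)) (pe a a')) = Some (Rt c 0)"
    by blast
  define us where "us = map (\<lambda>k. the (f (vs k))) [0..<M]"
  have len: "length us = M" unfolding us_def by simp
  have nth: "k < M \<Longrightarrow> us ! k = the (f (vs k))" for k unfolding us_def by simp
  have D: "D1 lh pr p T F (\<lambda>_. None) (pe a (enc (a' # take i us))) =
     Option.bind (Resn (pe (tenc (TB vs f i)) (pe a a')))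
       (\<lambda>s. Option.bind (U2 p F (p2 s)) (\<lambda>qf. Option.bind (U2 p T (p1 (p2 s)))
         (\<lambda>qt. Some (if p1 s = 3 then qf else qt))))" if iM: "i \<le> M" for i
  proof -
    define w where "w = enc (a' # take i us)"
    have L: "Ufn (pe lh w) = Some (Suc i)" using hlh Ufn_K1 iM len unfolding w_def by simp
    have "app2 K1 pr w 0 = Some a'" using hpr[rule_format, of 0 "a' # take i us"] unfolding w_def by simp
    then have A: "U2 pr w 0 = Some a'" by (rule U2_K1)
    have Pk: "piter (stage1 pr (pe a w) a') k (Some 0) = Some (tenc (TB vs f k))" if "k \<le> i" for k
      using that
    proof (induction k)
      case 0 then show ?case by (simp add: TB_def)
    next
      case (Suc k)
      then have k: "k < M" "k < i" using iM by auto
      have r: "Resn (pe (tenc (TB vs f k)) (pe a a')) = Some (Hl (vs k))" using st1 k by blast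
      have "app2 K1 pr w (Suc k) = Some ((a' # take i us) ! Suc k)"
        using hpr k len unfolding w_def by simp
      then have u: "U2 pr w (Suc k) = Some (the (f (vs k)))"
        using U2_K1 k nth len by simp
      show ?case using Suc k r u by (simp add: stage1_def tenc_TB_Suc)
    qed
    show ?thesis unfolding D1_def using L A Pk[of i] by (simp add: w_def)
  qed
  have Di: "K1 (smn C a) (enc (a' # take i us)) = app2 K1 p F (vs i)" if iM: "i < M" for i
  proof -
    obtain qf where qf: "app2 K1 p F (vs i) = Some qf" using hp by blast
    obtain qt where qt: "app2 K1 p T (p1 (vs i)) = Some qt" using hp by blast
    have "D1 lh pr p T F (\<lambda>_. None) (pe a (enc (a' # take i us))) = Some qf"
      using D[of i] iM st1 qf qt U2_K1 by simp
    then show ?thesis using K1_of_pcomp[OF hC] qf by simp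
  qed
  have DM: "K1 (smn C a) (enc (a' # us)) = app2 K1 p T c"
  proof -
    obtain qf where qf: "app2 K1 p F (pe c 0) = Some qf" using hp by blast
    obtain qt where qt: "app2 K1 p T c = Some qt" using hp by blast
    have "D1 lh pr p T F (\<lambda>_. None) (pe a (enc (a' # take M us))) = Some qt"
      using D[of M] st2 qf qt U2_K1 by simp
    then show ?thesis using K1_of_pcomp[OF hC] qt len by simp
  qed
  have "is_dialogue K1 f F p enc (smn C a) a' us"
    unfolding is_dialogue_def
  proof (intro allI impI)
    fix i assume "i < length us"
    then have i: "i < M" using len by simp
    show "\<exists>v. K1 (smn C a) (enc (a' # take i us)) = app2 K1 p F v \<and> f v = Some (us ! i)"
      by (rule exI[of _ "vs i"]) (use Di[OF i] st1 i nth in auto)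
  qed
  then show ?thesis unfolding rel_app_rel_def using DM by blast
qed

lemma dir1_r:
  assumes hR: "\<forall>g x y. R1 pr p T C g x = Some y \<longrightarrow> rf_eval g (rf_decode Rc) x y"
  shows "rel_app K1 f T F p enc Rc a = Some (smn C a)"
proof -
  obtain z where z: "app2 K1 p T (smn C a) = Some z" using hp by blast
  have "app2 K1 pr (enc [a]) 0 = Some a" using hpr[rule_format, of 0 "[a]"] by simp
  then have "R1 pr p T C (\<lambda>_. None) (enc [a]) = Some z"
    unfolding R1_def using U2_K1 z by simp
  then have "rf_eval (\<lambda>_. None) (rf_decode Rc) (enc [a]) z" using hR by blast
  then have "K1 Rc (enc [a]) = Some z" unfolding K1_def K1f_def by (rule phi_eq)
  then have "rel_app_rel K1 f T F p enc Rc a (smn C a)"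
    unfolding rel_app_rel_def is_dialogue_def using z
    by (intro exI[of _ "[]"]) simp
  then show ?thesis by (rule rel_app_eq)
qed

end




theorem mainTheorem5:
  fixes f :: "nat \<Rightarrow> nat option"
    and T F p :: nat and enc :: "nat list \<Rightarrow> nat"
  assumes "K1_structure T F p enc"
  shows "pca_isomorphic (K1f f) (rel_app K1 f T F p enc)"
proof -
  note ks = assms[unfolded K1_structure_def]
  have hT: "\<forall>x y. app2 K1 T x y = Some x" using ks by (elim conjE)
  have hF: "\<forall>x y. app2 K1 F x y = Some y" using ks by (elim conjE)
  have hp: "\<forall>x y. app2 K1 p x y \<noteq> None" using ks by (elim conjE)
  have henc: "inj enc" using ks by (elim conjE)
  obtain q0 q1 where hp01: "\<forall>x y z. app2 K1 p x y = Some z \<longrightarrow> K1 q0 z = Some x \<and> K1 q1 z = Some y"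
    using ks by (elim conjE exE)
  obtain lh where hlh: "\<forall>us. K1 lh (enc us) = Some (length us)" using ks by (elim conjE exE)
  obtain pr where hpr: "\<forall>us i. i < length us \<longrightarrow> app2 K1 pr (enc us) i = Some (us ! i)"
    using ks by (elim conjE exE)
  obtain sn where hsn: "\<forall>us x. app2 K1 sn (enc us) x = Some (enc (us @ [x]))" using ks by (elim conjE exE)
  note H = hT hF hp hp01 henc hlh hpr hsn
  have mc: "morph_comp (\<lambda>a::nat. {a}) (\<lambda>a. {a}) = (\<lambda>a. {a})"
    by (simp add: morph_comp_def)
  have m1: "applicative_morphism (K1f f) (rel_app K1 f T F p enc) (\<lambda>a. {a})"
  proof -
    obtain cD where cD: "\<forall>g x y. D1 lh pr p T F g x = Some y \<longrightarrow> rf_eval g cD x y"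
      using pcomp_D1[of lh pr p T F] unfolding pcomp_def by blast
    define C where "C = rf_encode cD"
    have hC: "\<forall>g x y. D1 lh pr p T F g x = Some y \<longrightarrow> rf_eval g (rf_decode C) x y"
      using cD by (simp add: C_def)
    obtain cR where cR: "\<forall>g x y. R1 pr p T C g x = Some y \<longrightarrow> rf_eval g cR x y"
      using pcomp_R1[of pr p T C] unfolding pcomp_def by blast
    define Rc where "Rc = rf_encode cR"
    have hR: "\<forall>g x y. R1 pr p T C g x = Some y \<longrightarrow> rf_eval g (rf_decode Rc) x y"
      using cR by (simp add: Rc_def)
    have key: "app2 (rel_app K1 f T F p enc) Rc a a' = Some c" if "K1f f a a' = Some c" for a a' c
    proof -
      have ph: "phi f a a' = Some c" using that by (simp add: K1f_def)
      have "rel_app K1 f T F p enc Rc a = Some (smn C a)"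
        by (rule dir1_r[OF H hR])
      moreover have "rel_app K1 f T F p enc (smn C a) a' = Some c"
        by (rule rel_app_eq[OF H dir1_dialogue[OF H hC ph]])
      ultimately show ?thesis unfolding app2_def by simp
    qed
    show ?thesis unfolding applicative_morphism_def
      apply (rule conjI, simp)
      apply (rule exI[of _ Rc])
      using key by simp
  qed
  have m2: "applicative_morphism (rel_app K1 f T F p enc) (K1f f) (\<lambda>a. {a})"
  proof -
    obtain cl where cl: "\<forall>g x y. loop2 sn (enc []) q1 q0 T g x = Some y \<longrightarrow> rf_eval g cl x y"
      using pcomp_loop2[of sn "enc []" q1 q0 T] unfolding pcomp_def by blast
    define C2 where "C2 = rf_encode cl"
    obtain cs where cs: "\<forall>g x. rf_eval g cs x (smn C2 x)"
      using tot_smn[of C2] unfolding tot_def by blast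
    have key: "app2 (K1f f) (rf_encode cs) a a' = Some c" if "rel_app K1 f T F p enc a a' = Some c" for a a' c
    proof -
      have "rel_app_rel K1 f T F p enc a a' c" by (rule rel_app_Some[OF H that])
      then have "loop2 sn (enc []) q1 q0 T f (pe a a') = Some c" by (rule loop2_correct[OF H])
      then have "rf_eval f (rf_decode C2) (pe a a') c" using cl by (simp add: C2_def)
      then have "rf_eval f (rf_decode (smn C2 a)) a' c" by (rule smn_eval)
      then have "phi f (smn C2 a) a' = Some c" by (rule phi_eq)
      moreover have "phi f (rf_encode cs) a = Some (smn C2 a)" using cs by (simp add: phi_eq)
      ultimately show ?thesis unfolding app2_def K1f_def by simp
    qed
    show ?thesis unfolding applicative_morphism_def
      apply (rule conjI, simp)
      apply (rule exI[of _ "rf_encode cs"])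
      using key by simp
  qed
  show ?thesis unfolding pca_isomorphic_def
    by (intro exI[of _ "\<lambda>a. {a}"] conjI m1 m2 mc)
qed


end
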